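(* Let $G$ be an abelian group, let $A,B\subset G$ be finite non-empty sets, let $0<\epsilon<\frac{1}{2}$, and set $\beta:=\beta((1+4\epsilon)|A|)$. If $|B|\geq (\frac{1}{2}+\epsilon)(|A|+\beta)$, then there are at least $\epsilon ^2 |B|^2$ ordered pairs $(b_1,b_2)\in B^2$ such that $b_1+b_2\not \in A$.
   Context: For a positive real $t$, $\beta(t)=\max\{|H|: H \text{ a subgroup of } G,\ |H|\leq t\}$. *)

theory Defs
  imports "HOL-Algebra.Algebra"
begin

text \<open>Subgroups of size at most t are necessarily finite; we require finiteness
  explicitly since card of an infinite set is 0 in Isabelle.\<close>
definition beta :: "('a, 'b) monoid_scheme \<Rightarrow> real \<Rightarrow> nat" where
  "beta G t = Max {card H | H. subgroup H G \<and> finite H \<and> real (card H) \<le> t}"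

end

theory Submission
  imports Defs
begin


definition sumset :: "('a,'b) monoid_scheme \<Rightarrow> 'a set \<Rightarrow> 'a set \<Rightarrow> 'a set" where
  "sumset M U V = (\<lambda>p. monoid.mult M (fst p) (snd p)) ` (Sigma U (\<lambda>_. V))"
definition rc :: "('a,'b) monoid_scheme \<Rightarrow> 'a set \<Rightarrow> 'a set \<Rightarrow> 'a \<Rightarrow> nat" where
  "rc M U V s = card {p \<in> Sigma U (\<lambda>_. V). monoid.mult M (fst p) (snd p) = s}"
definition Nt :: "('a,'b) monoid_scheme \<Rightarrow> real \<Rightarrow> 'a set \<Rightarrow> 'a set \<Rightarrow> real" where
  "Nt M t U V = (\<Sum>s\<in>sumset M U V. min t (real (rc M U V s)))"

lemma rc_zero: "s \<notin> sumset G U V \<Longrightarrow> rc G U V s = 0"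
proof -
  assume a: "s \<notin> sumset G U V"
  have "{p \<in> Sigma U (\<lambda>_. V). monoid.mult G (fst p) (snd p) = s} = {}"
    using a unfolding sumset_def by force
  then show ?thesis unfolding rc_def by (metis card.empty)
qed

lemma Nt_super:
  assumes "finite S" "sumset G U V \<subseteq> S" "0 \<le> t"
  shows "Nt G t U V = (\<Sum>s\<in>S. min t (real (rc G U V s)))"
  unfolding Nt_def
  by (rule sum.mono_neutral_left) (use assms in \<open>auto simp: rc_zero\<close>)

lemma sum_rc:
  assumes "finite U" "finite V" "finite S" "sumset G U V \<subseteq> S"
  shows "(\<Sum>s\<in>S. rc G U V s) = card U * card V"
proof -
  have "(\<Sum>s\<in>S. rc G U V s) = (\<Sum>s\<in>S. \<Sum>p\<in>{p \<in> Sigma U (\<lambda>_. V). monoid.mult G (fst p) (snd p) = s}. 1)"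
    unfolding rc_def by simp
  also have "\<dots> = (\<Sum>p\<in>Sigma U (\<lambda>_. V). 1)"
    by (rule sum.group) (use assms in \<open>auto simp: sumset_def\<close>)
  also have "\<dots> = card U * card V" by (simp add: card_cartesian_product)
  finally show ?thesis .
qed

lemma finite_sumset: "finite U \<Longrightarrow> finite V \<Longrightarrow> finite (sumset G U V)"
  unfolding sumset_def by simp

context comm_group begin

lemma rc_le:
  assumes "U \<subseteq> carrier G" "V \<subseteq> carrier G" "finite V"
  shows "rc G U V s \<le> card V"
  unfolding rc_def
proof (rule card_inj_on_le[of snd])
  show "inj_on snd {p \<in> Sigma U (\<lambda>_. V). fst p \<otimes> snd p = s}"
    using assms by (auto simp: inj_on_def) (metis right_cancel subsetD)
qed (use assms in auto)

lemma card_transl: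
  assumes "Z \<subseteq> carrier G" "e \<in> carrier G"
  shows "card ((\<lambda>y. y \<otimes> e) ` Z) = card Z"
  by (rule card_image) (use assms in \<open>auto simp: inj_on_def dest: right_cancel[THEN iffD1, rotated -1]\<close>)

lemma swap_prod: "a \<in> carrier G \<Longrightarrow> b \<in> carrier G \<Longrightarrow> c \<in> carrier G \<Longrightarrow>
   a \<otimes> c \<otimes> (b \<otimes> inv c) = b \<otimes> a"
  by (simp add: m_ac)


lemma decomp:
  assumes UV: "U \<subseteq> carrier G" "V \<subseteq> carrier G" "finite U" "finite V" and e: "e \<in> carrier G"
  defines "V1 \<equiv> {y\<in>V. y \<otimes> e \<in> U}"
  defines "U1 \<equiv> U \<union> (\<lambda>y. y \<otimes> e) ` V"
  defines "U2 \<equiv> U - (\<lambda>y. y \<otimes> e) ` V1"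
  defines "V2 \<equiv> V - V1"
  shows "rc G U V s = rc G U1 V1 s + rc G U2 V2 s"
proof -
  define T where "T = (\<lambda>y. y \<otimes> e) ` V1"
  define P where "P = {p\<in>Sigma U (\<lambda>_. V). fst p \<otimes> snd p = s}"
  define P1 where "P1 = {p \<in> P. snd p \<in> V1}"
  define P2 where "P2 = {p \<in> P. snd p \<in> V2 \<and> fst p \<in> T}"
  define P3 where "P3 = {p \<in> P. snd p \<in> V2 \<and> fst p \<notin> T}"
  define Q where "Q = {p\<in>Sigma U1 (\<lambda>_. V1). fst p \<otimes> snd p = s}"
  define Q2 where "Q2 = {p \<in> Q. fst p \<notin> U}"
  have fP: "finite P" unfolding P_def using UV by simp
  have fQ: "finite Q" unfolding Q_def U1_def V1_def using UV by simp
  have P3eq: "P3 = {p\<in>Sigma U2 (\<lambda>_. V2). fst p \<otimes> snd p = s}"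
    unfolding P3_def P_def U2_def T_def V2_def by auto
  have Qeq: "Q = P1 \<union> Q2" "P1 \<inter> Q2 = {}"
    unfolding Q_def Q2_def P1_def P_def U1_def V1_def by auto
  have Peq: "P = P1 \<union> P2 \<union> P3" "P1 \<inter> P2 = {}" "(P1 \<union> P2) \<inter> P3 = {}"
    unfolding P_def P1_def P2_def P3_def V2_def by auto
  define f where "f = (\<lambda>p. (snd p \<otimes> e, fst p \<otimes> inv e))"
  have finj: "inj_on f (Sigma (carrier G) (\<lambda>_. carrier G))"
    unfolding f_def inj_on_def
    by (auto simp: e dest: right_cancel[THEN iffD1, rotated -1])
  have P2c: "P2 \<subseteq> Sigma (carrier G) (\<lambda>_. carrier G)" "Q2 \<subseteq> Sigma (carrier G) (\<lambda>_. carrier G)"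
    unfolding P2_def Q2_def P_def Q_def U1_def V1_def using UV e by auto
  have fP2: "f ` P2 \<subseteq> Q2"
  proof
    fix q assume "q \<in> f ` P2"
    then obtain x y where xy: "(x,y) \<in> P2" "q = (y \<otimes> e, x \<otimes> inv e)" unfolding f_def by auto
    then obtain y1 where y1: "y1 \<in> V1" "x = y1 \<otimes> e" unfolding P2_def T_def by auto
    have c: "x \<in> carrier G" "y \<in> carrier G" "y1 \<in> carrier G"
      using xy y1 UV unfolding P2_def P_def V1_def by auto
    have "x \<otimes> inv e = y1" using y1 c e by (simp add: m_assoc)
    moreover have "y \<otimes> e \<otimes> (x \<otimes> inv e) = s"
      using xy c e swap_prod[of y x e] unfolding P2_def P_def by (simp add: m_comm)
    moreover have "y \<in> V" "y \<otimes> e \<notin> U" using xy unfolding P2_def P_def V2_def V1_def by auto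
    ultimately show "q \<in> Q2" using xy y1 unfolding Q2_def Q_def U1_def by auto
  qed
  have fQ2: "f ` Q2 \<subseteq> P2"
  proof
    fix q assume "q \<in> f ` Q2"
    then obtain x y where xy: "(x,y) \<in> Q2" "q = (y \<otimes> e, x \<otimes> inv e)" unfolding f_def by auto
    then obtain y2 where y2: "y2 \<in> V" "x = y2 \<otimes> e" "x \<notin> U" unfolding Q2_def Q_def U1_def by auto
    have c: "x \<in> carrier G" "y \<in> carrier G" "y2 \<in> carrier G"
      using xy y2 UV e unfolding Q2_def Q_def V1_def by auto
    have "x \<otimes> inv e = y2" using y2 c e by (simp add: m_assoc)
    moreover have "y \<otimes> e \<otimes> (x \<otimes> inv e) = s"
      using xy c e swap_prod[of y x e] unfolding Q2_def Q_def by (simp add: m_comm)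
    moreover have "y \<in> V1" using xy unfolding Q2_def Q_def by auto
    moreover have "y2 \<in> V2" using y2 unfolding V2_def V1_def by auto
    ultimately show "q \<in> P2" using xy y2 unfolding P2_def P_def T_def V1_def V2_def by auto
  qed
  have "card P2 \<le> card Q2"
    by (rule card_inj_on_le[OF inj_on_subset[OF finj P2c(1)] fP2]) (use fQ Q2_def in auto)
  moreover have "card Q2 \<le> card P2"
    by (rule card_inj_on_le[OF inj_on_subset[OF finj P2c(2)] fQ2]) (use fP P2_def in auto)
  ultimately have c2: "card P2 = card Q2" by simp
  have "card P = card P1 + card P2 + card P3"
    using Peq fP by (simp add: card_Un_disjoint)
  moreover have "card Q = card P1 + card Q2"
    using Qeq fQ by (simp add: card_Un_disjoint)
  ultimately have "card P = card Q + card P3" using c2 by simp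
  then show ?thesis unfolding rc_def P_def Q_def P3eq[symmetric] by simp
qed

end

context comm_group begin

lemma Nt_nonneg_terms: "0 \<le> t \<Longrightarrow> 0 \<le> min t (real n)" by simp

lemma terminal:
  assumes UV: "U \<subseteq> carrier G" "V \<subseteq> carrier G" "finite U" "finite V" "U \<noteq> {}" "V \<noteq> {}"
    and t: "0 < t" "t \<le> real (card V)"
    and T: "\<forall>e\<in>carrier G. (\<exists>y\<in>V. y \<otimes> e \<in> U) \<longrightarrow> (\<forall>y\<in>V. y \<otimes> e \<in> U)"
  shows "\<exists>H. subgroup H G \<and> finite H \<and>
    t * (real (card U) + real (card V) - t - real (card H)) \<le> Nt G t U V \<and>
    t * real (card H) \<le> Nt G t U V \<and> card H \<le> card U + card V"
proof -
  obtain x0 where x0: "x0 \<in> U" using UV by auto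
  obtain y0 where y0: "y0 \<in> V" using UV by auto
  have x0c: "x0 \<in> carrier G" and y0c: "y0 \<in> carrier G" using x0 y0 UV by auto
  define H where "H = {g \<in> carrier G. \<forall>x\<in>U. x \<otimes> g \<in> U}"
  have sg: "subgroup H G"
  proof (rule subgroupI)
    show "H \<subseteq> carrier G" unfolding H_def by auto
    show "H \<noteq> {}" unfolding H_def using UV by (auto intro!: exI[of _ \<one>] simp: subsetD)
  next
    fix a assume a: "a \<in> H"
    have ac: "a \<in> carrier G" using a H_def by auto
    have img: "(\<lambda>x. x \<otimes> a) ` U = U"
    proof (rule endo_inj_surj)
      show "finite U" by fact
      show "(\<lambda>x. x \<otimes> a) ` U \<subseteq> U" using a H_def by auto
      show "inj_on (\<lambda>x. x \<otimes> a) U" using UV ac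
        by (auto simp: inj_on_def dest: right_cancel[THEN iffD1, rotated -1])
    qed
    have "x \<otimes> inv a \<in> U" if x: "x \<in> U" for x
    proof -
      from x img obtain x' where x': "x' \<in> U" "x = x' \<otimes> a" by (metis imageE)
      then have "x \<otimes> inv a = x'" using UV ac by (auto simp: m_assoc)
      then show ?thesis using x' by simp
    qed
    then show "inv a \<in> H" unfolding H_def using ac by auto
  next
    fix a b assume "a \<in> H" "b \<in> H"
    then show "a \<otimes> b \<in> H" unfolding H_def using UV
      by (auto simp: m_assoc[symmetric])
  qed
  have Hsub: "H \<subseteq> (\<lambda>x. inv x0 \<otimes> x) ` U"
  proof
    fix g assume g: "g \<in> H"
    then have "x0 \<otimes> g \<in> U" "g \<in> carrier G" using x0 H_def by auto
    moreover have "g = inv x0 \<otimes> (x0 \<otimes> g)" using x0c \<open>g \<in> carrier G\<close> by (simp add: m_assoc[symmetric])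
    ultimately show "g \<in> (\<lambda>x. inv x0 \<otimes> x) ` U" by blast
  qed
  have fH: "finite H" using Hsub UV finite_surj by blast
  have cHU: "card H \<le> card U"
  proof (rule card_inj_on_le[of "\<lambda>g. x0 \<otimes> g"])
    show "inj_on ((\<otimes>) x0) H" using x0c H_def by (auto simp: inj_on_def)
    show "(\<otimes>) x0 ` H \<subseteq> U" using x0 H_def by auto
  qed (use UV in auto)
  have VH: "y \<otimes> inv y0 \<in> H" if y: "y \<in> V" for y
  proof -
    have yc: "y \<in> carrier G" using y UV by auto
    have "x \<otimes> (y \<otimes> inv y0) \<in> U" if x: "x \<in> U" for x
    proof -
      have xc: "x \<in> carrier G" using x UV by auto
      define e where "e = inv y0 \<otimes> x"
      have ec: "e \<in> carrier G" using e_def xc y0c by auto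
      have "y0 \<otimes> e = x" using e_def xc y0c by (simp add: m_assoc[symmetric])
      then have "\<exists>y\<in>V. y \<otimes> e \<in> U" using y0 x by auto
      then have "y \<otimes> e \<in> U" using T ec y by auto
      moreover have "y \<otimes> e = x \<otimes> (y \<otimes> inv y0)" using e_def xc yc y0c by (simp add: m_ac)
      ultimately show ?thesis by simp
    qed
    then show ?thesis unfolding H_def using yc y0c by auto
  qed
  have cVH: "card V \<le> card H"
  proof (rule card_inj_on_le[of "\<lambda>y. y \<otimes> inv y0"])
    show "inj_on (\<lambda>y. y \<otimes> inv y0) V" using UV y0c
      by (auto simp: inj_on_def dest: right_cancel[THEN iffD1, rotated -1])
  qed (use VH fH in auto)
  have rcb: "card V \<le> rc G U V (x \<otimes> y0)" if x: "x \<in> U" for x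
    unfolding rc_def
  proof (rule card_inj_on_le[of "\<lambda>y. (x \<otimes> y0 \<otimes> inv y, y)"])
    show "inj_on (\<lambda>y. (x \<otimes> y0 \<otimes> inv y, y)) V" by (auto simp: inj_on_def)
    have xc: "x \<in> carrier G" using x UV by auto
    show "(\<lambda>y. (x \<otimes> y0 \<otimes> inv y, y)) ` V \<subseteq> {p \<in> U \<times> V. fst p \<otimes> snd p = x \<otimes> y0}"
    proof (rule image_subsetI)
      fix y assume y: "y \<in> V"
      have yc: "y \<in> carrier G" using y UV by auto
      have "inv (y \<otimes> inv y0) \<in> H" using VH[OF y] subgroup.m_inv_closed[OF sg] by blast
      moreover have "inv (y \<otimes> inv y0) = y0 \<otimes> inv y" using yc y0c by (simp add: inv_mult_group)
      ultimately have "x \<otimes> (y0 \<otimes> inv y) \<in> U" using x H_def by auto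
      then have "x \<otimes> y0 \<otimes> inv y \<in> U" using xc yc y0c by (simp add: m_assoc)
      moreover have "x \<otimes> y0 \<otimes> inv y \<otimes> y = x \<otimes> y0" using xc yc y0c by (simp add: m_assoc)
      ultimately show "(x \<otimes> y0 \<otimes> inv y, y) \<in> {p \<in> U \<times> V. fst p \<otimes> snd p = x \<otimes> y0}" using y by simp
    qed
  qed (use UV in auto)
  define Z where "Z = (\<lambda>x. x \<otimes> y0) ` U"
  have cZ: "card Z = card U" unfolding Z_def by (rule card_transl) (use UV y0c in auto)
  have Zsub: "Z \<subseteq> sumset G U V" unfolding Z_def sumset_def using y0 by force
  have "t * real (card U) = (\<Sum>s\<in>Z. t)" using cZ by simp
  also have "\<dots> \<le> (\<Sum>s\<in>Z. min t (real (rc G U V s)))"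
  proof (rule sum_mono)
    fix s assume "s \<in> Z"
    then obtain x where "x \<in> U" "s = x \<otimes> y0" unfolding Z_def by auto
    then have "real (card V) \<le> real (rc G U V s)" using rcb by auto
    then show "t \<le> min t (real (rc G U V s))" using t by simp
  qed
  also have "\<dots> \<le> Nt G t U V" unfolding Nt_def
    by (rule sum_mono2) (use Zsub finite_sumset UV t in auto)
  finally have NU: "t * real (card U) \<le> Nt G t U V" .
  show ?thesis
  proof (intro exI conjI)
    show "subgroup H G" "finite H" by fact+
    show "card H \<le> card U + card V" using cHU by simp
    have "t * (real (card U) + real (card V) - t - real (card H)) \<le> t * real (card U)"
      using cVH t by (intro mult_left_mono) auto
    then show "t * (real (card U) + real (card V) - t - real (card H)) \<le> Nt G t U V" using NU by simp
    have "t * real (card H) \<le> t * real (card U)" using cHU t by simp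
    then show "t * real (card H) \<le> Nt G t U V" using NU by simp
  qed
qed

end

context comm_group begin

lemma min_split: "0 \<le> (a::real) \<Longrightarrow> a \<le> k \<Longrightarrow> k \<le> t \<Longrightarrow> 0 \<le> b \<Longrightarrow> a + min (t - k) b \<le> min t (a + b)"
  by (simp add: min_def)

lemma pollard:
  "\<forall>U t. finite V \<longrightarrow> finite U \<longrightarrow> U \<subseteq> carrier G \<longrightarrow> V \<subseteq> carrier G \<longrightarrow> 0 < t \<longrightarrow>
     t \<le> real (card U) \<longrightarrow> t \<le> real (card V) \<longrightarrow>
     (\<exists>H. subgroup H G \<and> finite H \<and>
       t * (real (card U) + real (card V) - t - real (card H)) \<le> Nt G t U V \<and>
       t * real (card H) \<le> Nt G t U V \<and> card H \<le> card U + card V)"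
proof (induction "card V" arbitrary: V rule: less_induct)
  case less
  show ?case
  proof (intro allI impI)
    fix U t
    assume fV: "finite V" and fU: "finite U" and Uc: "U \<subseteq> carrier G" and Vc: "V \<subseteq> carrier G"
      and t0: "0 < t" and tU: "t \<le> real (card U)" and tV: "t \<le> real (card V)"
    have Une: "U \<noteq> {}" using tU t0 by auto
    have Vne: "V \<noteq> {}" using tV t0 by auto
    show "\<exists>H. subgroup H G \<and> finite H \<and>
       t * (real (card U) + real (card V) - t - real (card H)) \<le> Nt G t U V \<and>
       t * real (card H) \<le> Nt G t U V \<and> card H \<le> card U + card V"
    proof (cases "\<forall>e\<in>carrier G. (\<exists>y\<in>V. y \<otimes> e \<in> U) \<longrightarrow> (\<forall>y\<in>V. y \<otimes> e \<in> U)")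
      case True
      then show ?thesis using terminal[OF Uc Vc fU fV Une Vne t0 tV] by blast
    next
      case False
      then obtain e y1 y2 where e: "e \<in> carrier G" and y1: "y1 \<in> V" "y1 \<otimes> e \<in> U"
        and y2: "y2 \<in> V" "y2 \<otimes> e \<notin> U" by blast
      define V1 where "V1 = {y\<in>V. y \<otimes> e \<in> U}"
      define U1 where "U1 = U \<union> (\<lambda>y. y \<otimes> e) ` V"
      define U2 where "U2 = U - (\<lambda>y. y \<otimes> e) ` V1"
      define V2 where "V2 = V - V1"
      define k where "k = card V1"
      have fV1: "finite V1" "finite V2" using fV V1_def V2_def by auto
      have fU1: "finite U1" "finite U2" using fU fV U1_def U2_def by auto
      have cU1: "U1 \<subseteq> carrier G" "U2 \<subseteq> carrier G" "V1 \<subseteq> carrier G" "V2 \<subseteq> carrier G"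
        using Uc Vc e U1_def U2_def V1_def V2_def by auto
      have k1: "1 \<le> k" unfolding k_def using y1 fV1 V1_def
        by (metis (mono_tags, lifting) One_nat_def Suc_leI card_gt_0_iff empty_iff mem_Collect_eq)
      have V1V: "V1 \<subseteq> V" using V1_def by auto
      have kV: "k < card V" unfolding k_def
        by (rule psubset_card_mono) (use fV V1_def y2 in auto)
      have imV1: "(\<lambda>y. y \<otimes> e) ` V1 \<subseteq> U" using V1_def by auto
      have cimV1: "card ((\<lambda>y. y \<otimes> e) ` V1) = k" unfolding k_def
        by (rule card_transl) (use cU1 e in auto)
      have cimV: "card ((\<lambda>y. y \<otimes> e) ` V) = card V"
        by (rule card_transl) (use Vc e in auto)
      have Int: "U \<inter> (\<lambda>y. y \<otimes> e) ` V = (\<lambda>y. y \<otimes> e) ` V1" using V1_def by auto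
      have "card U1 + card (U \<inter> (\<lambda>y. y \<otimes> e) ` V) = card U + card ((\<lambda>y. y \<otimes> e) ` V)"
        unfolding U1_def using card_Un_Int[of U "(\<lambda>y. y \<otimes> e) ` V"] fU fV by simp
      then have cardU1: "card U1 = card U + card V - k" using Int cimV1 cimV by simp
      have kU: "k \<le> card U" using card_mono[OF fU imV1] cimV1 by simp
      have cardU2: "card U2 = card U - k" unfolding U2_def
        using card_Diff_subset[OF finite_subset[OF imV1 fU] imV1] cimV1 by simp
      have cardV2: "card V2 = card V - k" unfolding V2_def k_def
        using card_Diff_subset[OF fV1(1) V1V] by simp
      define S0 where "S0 = sumset G U V \<union> sumset G U1 V1 \<union> sumset G U2 V2"
      have fS0: "finite S0" unfolding S0_def using fU fV fU1 fV1 by (simp add: finite_sumset)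
      have dec: "rc G U V s = rc G U1 V1 s + rc G U2 V2 s" for s
        unfolding U1_def V1_def U2_def V2_def by (rule decomp[OF Uc Vc fU fV e])
      have NUV: "Nt G t U V = (\<Sum>s\<in>S0. min t (real (rc G U V s)))"
        by (rule Nt_super) (use fS0 t0 S0_def in auto)
      show ?thesis
      proof (cases "t \<le> real k")
        case True
        have "\<exists>H. subgroup H G \<and> finite H \<and>
          t * (real (card U1) + real (card V1) - t - real (card H)) \<le> Nt G t U1 V1 \<and>
          t * real (card H) \<le> Nt G t U1 V1 \<and> card H \<le> card U1 + card V1"
        proof (rule less[rule_format])
          show "card V1 < card V" using kV k_def by simp
          show "t \<le> real (card U1)" using cardU1 tU kV by simp
          show "t \<le> real (card V1)" using True k_def by simp
        qed (use fV1 fU1 cU1 t0 in auto)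
        then obtain H where H: "subgroup H G" "finite H"
          "t * (real (card U1) + real (card V1) - t - real (card H)) \<le> Nt G t U1 V1"
          "t * real (card H) \<le> Nt G t U1 V1" "card H \<le> card U1 + card V1" by blast
        have N1: "Nt G t U1 V1 = (\<Sum>s\<in>S0. min t (real (rc G U1 V1 s)))"
          by (rule Nt_super) (use fS0 t0 S0_def in auto)
        have "Nt G t U1 V1 \<le> Nt G t U V" unfolding N1 NUV
          by (rule sum_mono) (use dec in auto)
        moreover have cc: "card U1 + card V1 = card U + card V" using cardU1 kV kU k_def by simp
        moreover have "real (card U1) + real (card V1) = real (card U) + real (card V)"
          using cc by (metis of_nat_add)
        ultimately show ?thesis using H by (intro exI[of _ H]) auto
      next
        case False
        have "\<exists>H. subgroup H G \<and> finite H \<and>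
          (t - k) * (real (card U2) + real (card V2) - (t - k) - real (card H)) \<le> Nt G (t - k) U2 V2 \<and>
          (t - k) * real (card H) \<le> Nt G (t - k) U2 V2 \<and> card H \<le> card U2 + card V2"
        proof (rule less[rule_format])
          show "card V2 < card V" using cardV2 k1 kV by simp
          show "t - k \<le> real (card U2)" using cardU2 tU kU by simp
          show "t - k \<le> real (card V2)" using cardV2 tV kV by simp
          show "0 < t - k" using False by simp
        qed (use fV1 fU1 cU1 in auto)
        then obtain H where H: "subgroup H G" "finite H"
          "(t - k) * (real (card U2) + real (card V2) - (t - k) - real (card H)) \<le> Nt G (t - k) U2 V2"
          "(t - k) * real (card H) \<le> Nt G (t - k) U2 V2" "card H \<le> card U2 + card V2" by blast
        have N2: "Nt G (t - k) U2 V2 = (\<Sum>s\<in>S0. min (t - k) (real (rc G U2 V2 s)))"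
          by (rule Nt_super) (use fS0 False S0_def in auto)
        have sr: "(\<Sum>s\<in>S0. rc G U1 V1 s) = card U1 * card V1"
          by (rule sum_rc) (use fU1 fV1 fS0 S0_def in auto)
        have "real (card U1 * card V1) + Nt G (t - k) U2 V2 =
              (\<Sum>s\<in>S0. real (rc G U1 V1 s) + min (t - k) (real (rc G U2 V2 s)))"
          unfolding N2 sum.distrib using sr by (metis of_nat_sum)
        also have "\<dots> \<le> Nt G t U V" unfolding NUV
        proof (rule sum_mono)
          fix s
          have "rc G U1 V1 s \<le> k" unfolding k_def by (rule rc_le) (use cU1 fV1 in auto)
          then show "real (rc G U1 V1 s) + min (t - real k) (real (rc G U2 V2 s)) \<le> min t (real (rc G U V s))"
            using min_split[of "real (rc G U1 V1 s)" "real k" t "real (rc G U2 V2 s)"] False dec[of s]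
            by simp
        qed
        finally have main: "real (card U1) * real k + Nt G (t - k) U2 V2 \<le> Nt G t U V"
          unfolding k_def by simp
        define u where "u = real (card U) + real (card V)"
        define h where "h = real (card H)"
        have rU1: "real (card U1) = u - k" using cardU1 kV kU u_def by simp
        have ru2: "real (card U2) + real (card V2) = u - 2 * k" using cardU2 cardV2 kV kU u_def by simp
        have h0: "0 \<le> h" using h_def by simp
        have hu: "h \<le> u - 2 * k" using H(5) ru2 h_def by linarith
        have I1: "(t - k) * (u - k - t - h) \<le> Nt G (t - k) U2 V2"
          using H(3) ru2 h_def by (simp add: algebra_simps)
        have I2: "(t - k) * h \<le> Nt G (t - k) U2 V2" using H(4) h_def by simp
        have e1: "(u - k) * k + (t - k) * (u - k - t - h) = t * (u - t - h) + k * h"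
          by (simp add: algebra_simps)
        have kh: "0 \<le> real k * h" using h0 by simp
        have g1: "t * (u - t - h) \<le> Nt G t U V"
          using main rU1 I1 e1 kh by (smt (verit) mult.commute)
        have "real k * h \<le> real k * (u - 2 * k)" using hu by (intro mult_left_mono) auto
        moreover have "real k * (u - 2 * k) \<le> (u - k) * k" by (simp add: algebra_simps)
        moreover have "t * h = (t - k) * h + k * h" by (simp add: algebra_simps)
        ultimately have g2: "t * h \<le> Nt G t U V" using main rU1 I2 by (smt (verit) mult.commute)
        have g3: "card H \<le> card U + card V" using H(5) cardU2 cardV2 by simp
        show ?thesis using H(1,2) g1 g2 g3 unfolding u_def h_def by blast
      qed
    qed
  qed
qed

end


lemma sum_rc_gen:
  assumes "finite U" "finite V" "finite T"
  shows "(\<Sum>s\<in>T. rc G U V s) = card {p \<in> U \<times> V. monoid.mult G (fst p) (snd p) \<in> T}"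
proof -
  let ?P = "{p \<in> U \<times> V. monoid.mult G (fst p) (snd p) \<in> T}"
  have "(\<Sum>s\<in>T. rc G U V s) = (\<Sum>s\<in>T. \<Sum>p\<in>{p \<in> ?P. monoid.mult G (fst p) (snd p) = s}. 1)"
    unfolding rc_def by (intro sum.cong) (auto intro!: arg_cong[where f=card])
  also have "\<dots> = (\<Sum>p\<in>?P. 1)"
    by (rule sum.group) (use assms in auto)
  also have "\<dots> = card ?P" by simp
  finally show ?thesis .
qed

theorem corollary3p3:
  fixes G (structure) and A B :: "'a set" and \<epsilon> :: real
  assumes "comm_group G"
    and "A \<subseteq> carrier G" and "B \<subseteq> carrier G"
    and "finite A" and "A \<noteq> {}" and "finite B" and "B \<noteq> {}"
    and "0 < \<epsilon>" and "\<epsilon> < 1/2"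
    and "real (card B) \<ge> (1/2 + \<epsilon>) * (real (card A) + real (beta G ((1 + 4*\<epsilon>) * real (card A))))"
  shows "real (card {(b1, b2). b1 \<in> B \<and> b2 \<in> B \<and> b1 \<otimes> b2 \<notin> A}) \<ge> \<epsilon>^2 * real (card B)^2"
proof (rule ccontr)
  interpret comm_group G by fact
  note Ac = assms(2) and Bc = assms(3) and fA = assms(4) and fB = assms(6)
  define n where "n = real (card B)"
  define a where "a = real (card A)"
  define bt where "bt = real (beta G ((1 + 4*\<epsilon>) * real (card A)))"
  define Bad where "Bad = {(b1, b2). b1 \<in> B \<and> b2 \<in> B \<and> b1 \<otimes> b2 \<notin> A}"
  define Good where "Good = {(b1, b2). b1 \<in> B \<and> b2 \<in> B \<and> b1 \<otimes> b2 \<in> A}"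
  define N where "N = real (card Bad)"
  assume "\<not> \<epsilon>^2 * real (card B)^2 \<le> real (card {(b1, b2). b1 \<in> B \<and> b2 \<in> B \<and> b1 \<otimes> b2 \<notin> A})"
  then have NL: "N < \<epsilon>^2 * n^2" unfolding N_def Bad_def n_def by simp
  have n0: "0 < n" unfolding n_def using fB assms(7) by (simp add: card_gt_0_iff)
  have fBB: "finite (B \<times> B)" using fB by simp
  have cG: "card Good \<le> card B * card A"
  proof -
    have "card Good \<le> card (B \<times> A)"
    proof (rule card_inj_on_le[of "\<lambda>p. (fst p, fst p \<otimes> snd p)"])
      show "inj_on (\<lambda>p. (fst p, fst p \<otimes> snd p)) Good"
      proof (rule inj_onI)
        fix p q assume p: "p \<in> Good" and q: "q \<in> Good" and eq: "(fst p, fst p \<otimes> snd p) = (fst q, fst q \<otimes> snd q)"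
        have c: "fst p \<in> carrier G" "snd p \<in> carrier G" "snd q \<in> carrier G"
          using p q Bc unfolding Good_def by auto
        from eq have "fst p = fst q" "fst p \<otimes> snd p = fst p \<otimes> snd q" by auto
        then have "snd p = snd q" using c by simp
        then show "p = q" using \<open>fst p = fst q\<close> by (simp add: prod_eq_iff)
      qed
      show "(\<lambda>p. (fst p, fst p \<otimes> snd p)) ` Good \<subseteq> B \<times> A" unfolding Good_def by auto
    qed (use fA fB in auto)
    then show ?thesis by (simp add: card_cartesian_product)
  qed
  have cGB: "card Good + card Bad = card B * card B"
  proof -
    have "Good \<union> Bad = B \<times> B" "Good \<inter> Bad = {}" unfolding Good_def Bad_def by auto
    moreover have "finite Good" "finite Bad" using fBB unfolding Good_def Bad_def
      by (auto intro: finite_subset[OF _ fBB])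
    ultimately show ?thesis using card_Un_disjoint[of Good Bad]
      by (simp add: card_cartesian_product)
  qed
  have "n * n \<le> n * a + N"
  proof -
    have "real (card Good) \<le> n * a" using cG unfolding n_def a_def by (metis of_nat_le_iff of_nat_mult)
    moreover have "real (card Good) + N = n * n" using cGB unfolding N_def n_def by (metis of_nat_add of_nat_mult)
    ultimately show ?thesis by linarith
  qed
  moreover have "\<epsilon> * \<epsilon> < (1/2) * (1/2)"
    using assms(8,9) by (intro mult_strict_mono) auto
  then have "\<epsilon>^2 * n^2 \<le> (1/4) * n^2" by (intro mult_right_mono) (auto simp: power2_eq_square)
  ultimately have "n * n < n * a + (1/4) * (n * n)" using NL by (simp add: power2_eq_square)
  then have "n * (3/4 * n) < n * a" by (simp add: algebra_simps)
  then have "3/4 * n < a" using n0 by (simp add: mult_less_cancel_left_pos)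
  moreover have "0 \<le> a" unfolding a_def by simp
  ultimately have n4a: "n \<le> 4 * a" by linarith
  define t where "t = \<epsilon> * n"
  have t0: "0 < t" using t_def assms(8) n0 by simp
  have "\<epsilon> * n \<le> 1 * n" using assms(9) n0 by (intro mult_right_mono) auto
  then have tn: "t \<le> n" using t_def by simp
  obtain H where H: "subgroup H G" "finite H"
    "t * (n + n - t - real (card H)) \<le> Nt G t B B" "t * real (card H) \<le> Nt G t B B"
    using pollard[rule_format, OF fB fB Bc Bc t0] tn unfolding n_def by blast
  have NtU: "Nt G t B B \<le> t * a + N"
  proof -
    define S where "S = sumset G B B"
    have fS: "finite S" using S_def finite_sumset fB by blast
    have "Nt G t B B = (\<Sum>s\<in>S \<inter> A. min t (real (rc G B B s))) + (\<Sum>s\<in>S - A. min t (real (rc G B B s)))"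
      unfolding Nt_def S_def[symmetric] by (rule sum.Int_Diff[OF fS])
    moreover have "(\<Sum>s\<in>S \<inter> A. min t (real (rc G B B s))) \<le> t * a"
    proof -
      have "(\<Sum>s\<in>S \<inter> A. min t (real (rc G B B s))) \<le> (\<Sum>s\<in>S \<inter> A. t)" by (rule sum_mono) simp
      also have "\<dots> = t * real (card (S \<inter> A))" by simp
      also have "\<dots> \<le> t * a" unfolding a_def using t0 card_mono[OF fA, of "S \<inter> A"] by simp
      finally show ?thesis .
    qed
    moreover have "(\<Sum>s\<in>S - A. min t (real (rc G B B s))) \<le> N"
    proof -
      have "(\<Sum>s\<in>S - A. min t (real (rc G B B s))) \<le> (\<Sum>s\<in>S - A. real (rc G B B s))" by (rule sum_mono) simp
      also have "\<dots> = real (card {p \<in> B \<times> B. fst p \<otimes> snd p \<in> S - A})"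
        by (subst sum_rc_gen[OF fB fB finite_Diff[OF fS], symmetric]) simp
      also have "{p \<in> B \<times> B. fst p \<otimes> snd p \<in> S - A} = Bad"
        unfolding Bad_def S_def sumset_def by (auto intro: rev_image_eqI)
      finally show ?thesis unfolding N_def .
    qed
    ultimately show ?thesis by linarith
  qed
  have "t * real (card H) < t * (a + \<epsilon> * n)"
    using H(4) NtU NL unfolding t_def by (simp add: algebra_simps power2_eq_square)
  then have "real (card H) < a + \<epsilon> * n" using t0 by simp
  moreover have "\<epsilon> * n \<le> \<epsilon> * (4 * a)" using n4a assms(8) by simp
  ultimately have cH: "real (card H) \<le> (1 + 4*\<epsilon>) * real (card A)" unfolding a_def by (simp add: algebra_simps)
  define T where "T = (1 + 4*\<epsilon>) * real (card A)"
  have fin: "finite {card K |K. subgroup K G \<and> finite K \<and> real (card K) \<le> T}"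
  proof (rule finite_subset[of _ "{..nat \<lceil>T\<rceil>}"])
    show "{card K |K. subgroup K G \<and> finite K \<and> real (card K) \<le> T} \<subseteq> {..nat \<lceil>T\<rceil>}"
    proof -
      have hlp: "k \<le> nat \<lceil>T\<rceil>" if "real k \<le> T" for k :: nat
      proof -
        have "real k \<le> real (nat \<lceil>T\<rceil>)" using that by (meson order_trans real_nat_ceiling_ge)
        then show ?thesis by simp
      qed
      show ?thesis using hlp by auto
    qed
  qed simp
  have "card H \<le> beta G T" unfolding beta_def
    by (rule Max_ge[OF fin]) (use H cH T_def in auto)
  then have Hb: "real (card H) \<le> bt" unfolding bt_def T_def by simp
  have "t * (n + n - t - bt) \<le> t * (n + n - t - real (card H))"
    using Hb t0 by (intro mult_left_mono) auto
  then have low: "t * (2 * n - t - bt - a) \<le> N" using H(3) NtU by (simp add: algebra_simps)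
  have hyp: "n \<ge> (1/2 + \<epsilon>) * (a + bt)" using assms(10) unfolding n_def a_def bt_def .
  have ab0: "0 \<le> a + bt" unfolding a_def bt_def by simp
  have "(2 - 2*\<epsilon>) * ((1/2 + \<epsilon>) * (a + bt)) \<le> (2 - 2*\<epsilon>) * n"
    using hyp assms(9) by (intro mult_left_mono) auto
  moreover have "(2 - 2*\<epsilon>) * ((1/2 + \<epsilon>) * (a + bt)) = (a + bt) + (\<epsilon> - 2*\<epsilon>^2) * (a + bt)"
    by (simp add: field_simps power2_eq_square)
  moreover have "0 \<le> (\<epsilon> - 2*\<epsilon>^2) * (a + bt)"
    using ab0 assms(8,9) by (intro mult_nonneg_nonneg) (auto simp: power2_eq_square)
  ultimately have key: "a + bt \<le> (2 - 2*\<epsilon>) * n" by linarith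
  have "2 * n - t - bt - a \<ge> \<epsilon> * n" using key unfolding t_def by (simp add: algebra_simps)
  then have "t * (\<epsilon> * n) \<le> t * (2 * n - t - bt - a)" using t0 by (intro mult_left_mono) auto
  then have "\<epsilon>^2 * n^2 \<le> N" using low unfolding t_def by (simp add: power2_eq_square algebra_simps)
  then show False using NL by simp
qed


end
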